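(* Let $\mathbb M=M_1\diamond\cdots\diamond M_r\in\mathcal{CM}$ with each $M_j$ a basis element of $\mathcal AM_{-1}$, and let $\mathbb F\in\mathcal{CF}$ be a clumped forest with $\Phi(\mathbb F)=\mathbb M$. Let $\mathcal B$ be the set of $r$-tuples $(\tau_1,\dots,\tau_r)$ of aromatic trees such that $\tau_1\cdots\tau_r=\mathbb F$ and $\Phi(\tau_j)=M_j$ for every $j=1,\dots,r$. Then $|\mathcal B|=\sigma^{ext}(\mathbb M)/\sigma^{ext}(\mathbb F)$.
   Context: Fix a finite set $C$. Multi-indices: monomials $x^{\mathbf k}$ in variables $x^a_j$ ($a\in C$, $j\ge-1$) of weight $\sum jk^a_j$; $M_n$ is the span of monomials of weight $n$ ($n=-1,0$, non-constant for $n=0$); $S(\cdot)$ is the symmetric algebra with product $\odot$; $\mathcal AM_{-1}=S(M_0)\otimes M_{-1}$, whose basis elements are $x^{\kappa^1}\odot\cdots\odot x^{\kappa^m}\odot x^{\mathbf k}$; $\mathcal{CM}=S(\mathcal AM_{-1})$ with product $\diamond$. Trees: an aromatic tree is a finite directed graph with $C$-decorated vertices in which each vertex has exactly one outgoing edge except the root, up to isomorphism (the root component is a tree, the others are aromas); $\mathcal{CF}=S(\mathcal AT)$ is the free commutative algebra on aromatic trees (clumped forests; product by juxtaposition, each aromatic tree being one factor). Fertility map: $\Phi(\mathbf a\tau)=\Phi(a^1)\odot\cdots\odot\Phi(a^n)\odot\Phi(\tau)$ for $\mathbf a=a^1\cdots a^n$, where for a tree or aroma $\Phi=\prod_v x^{d(v)}_{f(v)-1}$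 with $d(v)$ the decoration and $f(v)$ the number of edges ending at $v$; on $\mathcal{CF}$, $\Phi(\pi_1\cdots\pi_r)=\Phi(\pi_1)\diamond\cdots\diamond\Phi(\pi_r)$. External symmetry factors: for pairwise distinct $Y^i$, $\sigma^{ext}((Y^1)^{\diamond p_1}\diamond\cdots\diamond(Y^n)^{\diamond p_n})=\prod p_i!$; for pairwise distinct aromatic trees $\pi^i$, $\sigma^{ext}((\pi^1)^{p_1}\cdots(\pi^n)^{p_n})=\prod p_i!$. *)

theory Defs
  imports Complex_Main "HOL-Library.Multiset"
begin

text \<open>A monomial x^k in the variables x^a_j (a in C, j >= -1) is a multiset of pairs (a, j).\<close>
type_synonym 'c monomial = "('c \<times> int) multiset"

definition mono_ok :: "'c monomial \<Rightarrow> bool" where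
  "mono_ok m \<longleftrightarrow> (\<forall>x \<in># m. snd x \<ge> -1)"

definition weight :: "'c monomial \<Rightarrow> int" where
  "weight m = (\<Sum>x \<in># m. snd x)"

text \<open>Basis element of AM_{-1} = S(M_0) tensor M_{-1}:
  a multiset of non-constant weight-0 monomials (the odot-factors from S(M_0))
  together with one weight -1 monomial.\<close>
type_synonym 'c am_basis = "'c monomial multiset \<times> 'c monomial"

definition is_AM_basis :: "'c am_basis \<Rightarrow> bool" where
  "is_AM_basis B \<longleftrightarrow>
     (\<forall>m \<in># fst B. mono_ok m \<and> m \<noteq> {#} \<and> weight m = 0) \<and>
     mono_ok (snd B) \<and> weight (snd B) = -1"

text \<open>A raw aromatic tree (n, d, p, rho): vertices {0..<n}, decoration d, root rho,
  and every non-root vertex v has exactly one outgoing edge v -> p v.\<close>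
type_synonym 'c raw_at = "nat \<times> (nat \<Rightarrow> 'c) \<times> (nat \<Rightarrow> nat) \<times> nat"

definition raw_wf :: "'c raw_at \<Rightarrow> bool" where
  "raw_wf r = (case r of (n, d, p, \<rho>) \<Rightarrow> \<rho> < n \<and> (\<forall>v<n. v \<noteq> \<rho> \<longrightarrow> p v < n))"

definition raw_iso :: "'c raw_at \<Rightarrow> 'c raw_at \<Rightarrow> bool" where
  "raw_iso r r' = (case r of (n, d, p, \<rho>) \<Rightarrow> case r' of (n', d', p', \<rho>') \<Rightarrow>
     (\<exists>f. bij_betw f {0..<n} {0..<n'} \<and> f \<rho> = \<rho>' \<and>
          (\<forall>v<n. d' (f v) = d v) \<and> (\<forall>v<n. v \<noteq> \<rho> \<longrightarrow> p' (f v) = f (p v))))"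

definition at_class :: "'c raw_at \<Rightarrow> 'c raw_at set" where
  "at_class r = {r'. raw_wf r' \<and> raw_iso r r'}"

definition aromatic_trees :: "'c raw_at set set" where
  "aromatic_trees = {at_class r | r. raw_wf r}"

definition raw_step :: "'c raw_at \<Rightarrow> nat \<Rightarrow> nat" where
  "raw_step r v = (case r of (n, d, p, \<rho>) \<Rightarrow> if v = \<rho> then \<rho> else p v)"

text \<open>Weak connectivity in a functional graph: the forward orbits meet.\<close>
definition raw_conn :: "'c raw_at \<Rightarrow> nat \<Rightarrow> nat \<Rightarrow> bool" where
  "raw_conn r u v \<longleftrightarrow> (\<exists>i j. (raw_step r ^^ i) u = (raw_step r ^^ j) v)"

definition raw_verts :: "'c raw_at \<Rightarrow> nat set" where
  "raw_verts r = {0..<fst r}"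

definition raw_root :: "'c raw_at \<Rightarrow> nat" where
  "raw_root r = snd (snd (snd r))"

definition raw_fert :: "'c raw_at \<Rightarrow> nat \<Rightarrow> nat" where
  "raw_fert r v = card {u \<in> raw_verts r. u \<noteq> raw_root r \<and> fst (snd (snd r)) u = v}"

definition raw_mono :: "'c raw_at \<Rightarrow> nat set \<Rightarrow> 'c monomial" where
  "raw_mono r V = image_mset (\<lambda>v. (fst (snd r) v, int (raw_fert r v) - 1)) (mset_set V)"

definition raw_root_comp :: "'c raw_at \<Rightarrow> nat set" where
  "raw_root_comp r = {v \<in> raw_verts r. raw_conn r v (raw_root r)}"

definition raw_aromas :: "'c raw_at \<Rightarrow> nat set set" where
  "raw_aromas r = {{v \<in> raw_verts r. raw_conn r u v} | u. u \<in> raw_verts r \<and> u \<notin> raw_root_comp r}"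

text \<open>Fertility map Phi(a^1 ... a^n tau) = Phi(a^1) odot ... odot Phi(a^n) odot Phi(tau).\<close>
definition raw_Phi :: "'c raw_at \<Rightarrow> 'c am_basis" where
  "raw_Phi r = (image_mset (raw_mono r) (mset_set (raw_aromas r)), raw_mono r (raw_root_comp r))"

definition Phi_at :: "'c raw_at set \<Rightarrow> 'c am_basis" where
  "Phi_at T = raw_Phi (SOME r. r \<in> T)"

text \<open>Clumped forests: elements of CF = S(AT), i.e. finite multisets of aromatic trees;
  CM basis elements are multisets of AM_{-1} basis elements; Phi on CF is multiplicative.\<close>
definition Phi_CF :: "'c raw_at set multiset \<Rightarrow> 'c am_basis multiset" where
  "Phi_CF F = image_mset Phi_at F"

definition sigma_ext :: "'a multiset \<Rightarrow> nat" where
  "sigma_ext M = (\<Prod>x \<in> set_mset M. fact (count M x))"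

end

theory Submission
  imports Defs
begin

lemma sigma_ext_pos: "sigma_ext M > 0"
  unfolding sigma_ext_def by (simp add: prod_pos)

lemma sigma_ext_remove:
  assumes "x \<in># M"
  shows "sigma_ext M = count M x * sigma_ext (M - {#x#})"
proof -
  have sup: "sigma_ext N = (\<Prod>y\<in>set_mset M. fact (count N y))" if "set_mset N \<subseteq> set_mset M" for N
    unfolding sigma_ext_def
    by (rule prod.mono_neutral_left) (use that in \<open>auto simp: not_in_iff\<close>)
  have "sigma_ext M = fact (count M x) * (\<Prod>y\<in>set_mset M - {x}. fact (count M y))"
    unfolding sigma_ext_def using assms by (simp add: prod.remove)
  also have "fact (count M x) = count M x * fact (count M x - 1)"
  proof -
    obtain n where "count M x = Suc n" using assms by (metis count_greater_zero_iff gr0_implies_Suc)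
    then show ?thesis by simp
  qed
  also have "(\<Prod>y\<in>set_mset M - {x}. fact (count M y)) = (\<Prod>y\<in>set_mset M - {x}. fact (count (M - {#x#}) y))"
    by (rule prod.cong) auto
  also have "sigma_ext (M - {#x#}) = fact (count (M - {#x#}) x) * (\<Prod>y\<in>set_mset M - {x}. fact (count (M - {#x#}) y))"
    using sup[of "M - {#x#}"] assms by (simp add: prod.remove in_diffD subsetI)
  ultimately show ?thesis by simp
qed

lemma count_lists:
  fixes g :: "'a \<Rightarrow> 'b"
  shows "image_mset g F = mset Ms \<Longrightarrow>
    real (card {ts. mset ts = F \<and> map g ts = Ms}) = real (sigma_ext (mset Ms)) / real (sigma_ext F)"
proof (induction Ms arbitrary: F)
  case Nil
  then have "F = {#}" by simp
  then have "{ts. mset ts = F \<and> map g ts = []} = {[]}" by auto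
  then show ?case using \<open>F = {#}\<close> by (simp add: sigma_ext_def)
next
  case (Cons b Ms F)
  define T where "T = {t \<in> set_mset F. g t = b}"
  have finT: "finite T" unfolding T_def by simp
  have eq: "{ts. mset ts = F \<and> map g ts = b # Ms} =
     (\<Union>t\<in>T. (Cons t) ` {ts. mset ts = F - {#t#} \<and> map g ts = Ms})"
  proof (rule set_eqI)
    fix xs
    show "xs \<in> {ts. mset ts = F \<and> map g ts = b # Ms} \<longleftrightarrow>
      xs \<in> (\<Union>t\<in>T. (Cons t) ` {ts. mset ts = F - {#t#} \<and> map g ts = Ms})"
    proof
      assume "xs \<in> {ts. mset ts = F \<and> map g ts = b # Ms}"
      then obtain t ts where xs: "xs = t # ts" "mset xs = F" "g t = b" "map g ts = Ms"
        by (cases xs) auto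
      then have "t \<in> T" unfolding T_def by auto
      moreover have "ts \<in> {ts. mset ts = F - {#t#} \<and> map g ts = Ms}" using xs by auto
      ultimately show "xs \<in> (\<Union>t\<in>T. (Cons t) ` {ts. mset ts = F - {#t#} \<and> map g ts = Ms})"
        using xs(1) by blast
    next
      assume "xs \<in> (\<Union>t\<in>T. (Cons t) ` {ts. mset ts = F - {#t#} \<and> map g ts = Ms})"
      then obtain t ts where "t \<in> T" "xs = t # ts" "mset ts = F - {#t#}" "map g ts = Ms" by auto
      then show "xs \<in> {ts. mset ts = F \<and> map g ts = b # Ms}"
        unfolding T_def by auto
    qed
  qed
  have fin: "finite {ts. mset ts = F' \<and> map g ts = Ms}" for F'
  proof -
    have "{ts. mset ts = F' \<and> map g ts = Ms} \<subseteq> {ts. set ts \<subseteq> set_mset F' \<and> length ts = size F'}"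
      by auto
    moreover have "finite {ts. set ts \<subseteq> set_mset F' \<and> length ts = size F'}"
      by (rule finite_lists_length_eq) simp
    ultimately show ?thesis by (rule finite_subset)
  qed
  have "card {ts. mset ts = F \<and> map g ts = b # Ms} =
      (\<Sum>t\<in>T. card ((Cons t) ` {ts. mset ts = F - {#t#} \<and> map g ts = Ms}))"
    unfolding eq by (rule card_UN_disjoint) (use finT fin in auto)
  also have "\<dots> = (\<Sum>t\<in>T. card {ts. mset ts = F - {#t#} \<and> map g ts = Ms})"
    by (rule sum.cong) (auto simp: card_image)
  finally have c: "real (card {ts. mset ts = F \<and> map g ts = b # Ms}) =
      (\<Sum>t\<in>T. real (card {ts. mset ts = F - {#t#} \<and> map g ts = Ms}))" by simp
  have step: "real (card {ts. mset ts = F - {#t#} \<and> map g ts = Ms}) =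
      real (sigma_ext (mset Ms)) * real (count F t) / real (sigma_ext F)" if "t \<in> T" for t
  proof -
    have tF: "t \<in># F" "g t = b" using that unfolding T_def by auto
    have "image_mset g (F - {#t#}) = image_mset g F - {#g t#}"
      using tF by (simp add: image_mset_Diff)
    then have "image_mset g (F - {#t#}) = mset Ms" using Cons.prems tF by simp
    then have "real (card {ts. mset ts = F - {#t#} \<and> map g ts = Ms}) =
        real (sigma_ext (mset Ms)) / real (sigma_ext (F - {#t#}))" by (rule Cons.IH)
    moreover have "real (sigma_ext F) = real (count F t) * real (sigma_ext (F - {#t#}))"
      using sigma_ext_remove[OF tF(1)] by simp
    moreover have "real (sigma_ext (F - {#t#})) > 0" using sigma_ext_pos by simp
    moreover have "real (count F t) > 0" using tF by simp
    ultimately show ?thesis by (simp add: field_simps)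
  qed
  have cnt: "(\<Sum>t\<in>T. real (count F t)) = real (count (mset (b # Ms)) b)"
  proof -
    have "count (mset (b # Ms)) b = count (image_mset g F) b" using Cons.prems by simp
    also have "\<dots> = (\<Sum>t\<in>T. count F t)" unfolding count_image_mset T_def
      by (rule sum.cong) auto
    finally show ?thesis by simp
  qed
  have bM: "b \<in># mset (b # Ms)" by simp
  have sig: "real (sigma_ext (mset (b # Ms))) = real (count (mset (b # Ms)) b) * real (sigma_ext (mset Ms))"
    using sigma_ext_remove[OF bM] by (simp only: of_nat_mult mset.simps(2) add_mset_remove_trivial)
  have "real (card {ts. mset ts = F \<and> map g ts = b # Ms}) =
      real (sigma_ext (mset Ms)) * (\<Sum>t\<in>T. real (count F t)) / real (sigma_ext F)"
    unfolding c using step by (simp add: sum_distrib_left sum_divide_distrib)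
  also have "\<dots> = real (sigma_ext (mset (b # Ms))) / real (sigma_ext F)"
    unfolding cnt sig by simp
  finally show ?case .
qed

theorem proposition4p5:
  fixes Ms :: "('c::finite) am_basis list"
    and F :: "'c raw_at set multiset"
  assumes "\<forall>j < length Ms. is_AM_basis (Ms ! j)"
    and "set_mset F \<subseteq> aromatic_trees"
    and "Phi_CF F = mset Ms"
  shows "real (card {ts. length ts = length Ms \<and> set ts \<subseteq> aromatic_trees \<and>
                         mset ts = F \<and> (\<forall>j < length Ms. Phi_at (ts ! j) = Ms ! j)})
         = real (sigma_ext (mset Ms)) / real (sigma_ext F)"
proof -
  have "{ts. length ts = length Ms \<and> set ts \<subseteq> aromatic_trees \<and>
                         mset ts = F \<and> (\<forall>j < length Ms. Phi_at (ts ! j) = Ms ! j)}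
      = {ts. mset ts = F \<and> map Phi_at ts = Ms}"
  proof (rule set_eqI)
    fix ts
    show "ts \<in> {ts. length ts = length Ms \<and> set ts \<subseteq> aromatic_trees \<and>
                         mset ts = F \<and> (\<forall>j < length Ms. Phi_at (ts ! j) = Ms ! j)} \<longleftrightarrow>
          ts \<in> {ts. mset ts = F \<and> map Phi_at ts = Ms}"
    proof
      assume "ts \<in> {ts. length ts = length Ms \<and> set ts \<subseteq> aromatic_trees \<and>
                         mset ts = F \<and> (\<forall>j < length Ms. Phi_at (ts ! j) = Ms ! j)}"
      then have "mset ts = F" "length ts = length Ms" "\<forall>j < length Ms. Phi_at (ts ! j) = Ms ! j" by auto
      moreover then have "map Phi_at ts = Ms" by (simp add: list_eq_iff_nth_eq)
      ultimately show "ts \<in> {ts. mset ts = F \<and> map Phi_at ts = Ms}" by simp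
    next
      assume "ts \<in> {ts. mset ts = F \<and> map Phi_at ts = Ms}"
      then have a: "mset ts = F" "map Phi_at ts = Ms" by auto
      then have "set ts \<subseteq> aromatic_trees" using assms(2) by (metis set_mset_mset)
      moreover have "length ts = length Ms" using a by auto
      moreover have "\<forall>j < length Ms. Phi_at (ts ! j) = Ms ! j" using a by auto
      ultimately show "ts \<in> {ts. length ts = length Ms \<and> set ts \<subseteq> aromatic_trees \<and>
                         mset ts = F \<and> (\<forall>j < length Ms. Phi_at (ts ! j) = Ms ! j)}" using a by simp
    qed
  qed
  moreover have "image_mset Phi_at F = mset Ms" using assms(3) unfolding Phi_CF_def .
  ultimately show ?thesis using count_lists[of Phi_at F Ms] by simp
qed

end
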